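(* Let $(M,d)$ be a bounded metric space such that the family $\mathcal{A}(M)$ of admissible subsets is compact and has normal structure. Then every orbitally wrt nonexpansive mapping $T: M\to M$ has a fixed point in $M$.
   Context: For $x\in M$ and $K\subseteq M$: $r_x(K)=\sup\{d(x,y):y\in K\}$, $r(K)=\inf\{r_x(K):x\in K\}$, $\delta(K)$ is the diameter of $K$. A bounded subset is admissible if it equals the intersection of all closed balls of $M$ containing it. $\mathcal{A}(M)$ is compact if every descending chain of nonempty admissible sets has nonempty intersection; it has normal structure if $r(K)<\delta(K)$ for every $K\in\mathcal{A}(M)$ with $\delta(K)>0$. $O_T(y)=\{y,Ty,T^2y,\dots\}$; $T$ is orbitally wrt nonexpansive if $d(Tx,Ty)\le r_x(O_T(y))$ for all $x,y\in M$. *)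

theory Defs
  imports "HOL-Analysis.Analysis"
begin

definition rad_pt :: "('a \<Rightarrow> 'a \<Rightarrow> real) \<Rightarrow> 'a \<Rightarrow> 'a set \<Rightarrow> real" where
  "rad_pt d x K = Sup {d x y | y. y \<in> K}"

definition cheb_rad :: "('a \<Rightarrow> 'a \<Rightarrow> real) \<Rightarrow> 'a set \<Rightarrow> real" where
  "cheb_rad d K = Inf {rad_pt d x K | x. x \<in> K}"

definition diam :: "('a \<Rightarrow> 'a \<Rightarrow> real) \<Rightarrow> 'a set \<Rightarrow> real" where
  "diam d K = Sup {d x y | x y. x \<in> K \<and> y \<in> K}"

definition bounded_metric :: "'a set \<Rightarrow> ('a \<Rightarrow> 'a \<Rightarrow> real) \<Rightarrow> bool" where
  "bounded_metric M d \<longleftrightarrow> (\<exists>B. \<forall>x\<in>M. \<forall>y\<in>M. d x y \<le> B)"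

definition closed_balls :: "'a set \<Rightarrow> ('a \<Rightarrow> 'a \<Rightarrow> real) \<Rightarrow> 'a set set" where
  "closed_balls M d = {{y \<in> M. d x y \<le> r} | x r. x \<in> M \<and> r \<ge> 0}"

definition admissible :: "'a set \<Rightarrow> ('a \<Rightarrow> 'a \<Rightarrow> real) \<Rightarrow> 'a set \<Rightarrow> bool" where
  "admissible M d A \<longleftrightarrow> A \<subseteq> M \<and> (\<exists>B. \<forall>x\<in>A. \<forall>y\<in>A. d x y \<le> B) \<and>
     A = M \<inter> \<Inter>{C \<in> closed_balls M d. A \<subseteq> C}"

definition adm_compact :: "'a set \<Rightarrow> ('a \<Rightarrow> 'a \<Rightarrow> real) \<Rightarrow> bool" where
  "adm_compact M d \<longleftrightarrow>
     (\<forall>F. F \<noteq> {} \<and> (\<forall>A\<in>F. admissible M d A \<and> A \<noteq> {}) \<and>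
          (\<forall>A\<in>F. \<forall>B\<in>F. A \<subseteq> B \<or> B \<subseteq> A) \<longrightarrow> \<Inter>F \<noteq> {})"

definition adm_normal :: "'a set \<Rightarrow> ('a \<Rightarrow> 'a \<Rightarrow> real) \<Rightarrow> bool" where
  "adm_normal M d \<longleftrightarrow>
     (\<forall>K. admissible M d K \<and> diam d K > 0 \<longrightarrow> cheb_rad d K < diam d K)"

definition orbit :: "('a \<Rightarrow> 'a) \<Rightarrow> 'a \<Rightarrow> 'a set" where
  "orbit T y = range (\<lambda>n. (T ^^ n) y)"

definition orbitally_wrt_nonexpansive :: "'a set \<Rightarrow> ('a \<Rightarrow> 'a \<Rightarrow> real) \<Rightarrow> ('a \<Rightarrow> 'a) \<Rightarrow> bool" where
  "orbitally_wrt_nonexpansive M d T \<longleftrightarrow>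
     (\<forall>x\<in>M. \<forall>y\<in>M. d (T x) (T y) \<le> rad_pt d x (orbit T y))"

end

theory Submission
  imports Defs
begin

lemma admissible_iff:
  "admissible M d A \<longleftrightarrow> A \<subseteq> M \<and> (\<exists>B. \<forall>x\<in>A. \<forall>y\<in>A. d x y \<le> B) \<and>
     (\<forall>x\<in>M. (\<forall>C\<in>closed_balls M d. A \<subseteq> C \<longrightarrow> x \<in> C) \<longrightarrow> x \<in> A)"
  unfolding admissible_def by blast

lemma admissible_Inter:
  assumes "bounded_metric M d" "F \<noteq> {}" "\<forall>A\<in>F. admissible M d A"
  shows "admissible M d (\<Inter>F)"
proof -
  obtain B where B: "\<forall>x\<in>M. \<forall>y\<in>M. d x y \<le> B" using assms(1) unfolding bounded_metric_def by blast
  have sub: "\<Inter>F \<subseteq> M" using assms(2,3) unfolding admissible_def by blast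
  show ?thesis unfolding admissible_iff
  proof (intro conjI)
    show "\<Inter>F \<subseteq> M" by fact
    show "\<exists>B. \<forall>x\<in>\<Inter>F. \<forall>y\<in>\<Inter>F. d x y \<le> B" using sub B by blast
    show "\<forall>x\<in>M. (\<forall>C\<in>closed_balls M d. \<Inter> F \<subseteq> C \<longrightarrow> x \<in> C) \<longrightarrow> x \<in> \<Inter> F"
    proof (intro ballI impI InterI)
      fix x A assume x: "x \<in> M" and h: "\<forall>C\<in>closed_balls M d. \<Inter> F \<subseteq> C \<longrightarrow> x \<in> C" and A: "A \<in> F"
      have "\<forall>C\<in>closed_balls M d. A \<subseteq> C \<longrightarrow> x \<in> C" using h A by blast
      then show "x \<in> A" using assms(3) A x unfolding admissible_iff by blast
    qed
  qed
qed

lemma admissible_ball: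
  assumes "bounded_metric M d" "x \<in> M" "r \<ge> 0"
  shows "admissible M d {y \<in> M. d x y \<le> r}"
proof -
  obtain B where B: "\<forall>x\<in>M. \<forall>y\<in>M. d x y \<le> B" using assms(1) unfolding bounded_metric_def by blast
  have "{y \<in> M. d x y \<le> r} \<in> closed_balls M d" using assms unfolding closed_balls_def by blast
  then show ?thesis unfolding admissible_iff using B by blast
qed

lemma admissible_cov:
  assumes "bounded_metric M d" "S \<subseteq> M"
  shows "admissible M d (M \<inter> \<Inter>{C \<in> closed_balls M d. S \<subseteq> C})"
proof -
  obtain B where B: "\<forall>x\<in>M. \<forall>y\<in>M. d x y \<le> B" using assms(1) unfolding bounded_metric_def by blast
  show ?thesis unfolding admissible_iff
  proof (intro conjI)
    show "\<exists>B. \<forall>x\<in>M \<inter> \<Inter>{C \<in> closed_balls M d. S \<subseteq> C}. \<forall>y\<in>M \<inter> \<Inter>{C \<in> closed_balls M d. S \<subseteq> C}. d x y \<le> B"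
      using B by blast
    show "\<forall>x\<in>M. (\<forall>C\<in>closed_balls M d. M \<inter> \<Inter> {C \<in> closed_balls M d. S \<subseteq> C} \<subseteq> C \<longrightarrow> x \<in> C) \<longrightarrow>
        x \<in> M \<inter> \<Inter> {C \<in> closed_balls M d. S \<subseteq> C}"
      using assms(2) by blast
  qed auto
qed

lemma cov_least:
  assumes "admissible M d A" "S \<subseteq> A"
  shows "M \<inter> \<Inter>{C \<in> closed_balls M d. S \<subseteq> C} \<subseteq> A"
  using assms unfolding admissible_iff by blast

theorem corollary2p4:
  fixes M :: "'a set" and d :: "'a \<Rightarrow> 'a \<Rightarrow> real" and T :: "'a \<Rightarrow> 'a"
  assumes "Metric_space M d" and "M \<noteq> {}" and "bounded_metric M d"
    and "adm_compact M d" and "adm_normal M d"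
    and "\<forall>x\<in>M. T x \<in> M"
    and "orbitally_wrt_nonexpansive M d T"
  shows "\<exists>x\<in>M. T x = x"
proof -
  interpret Metric_space M d by fact
  obtain B where B: "\<forall>x\<in>M. \<forall>y\<in>M. d x y \<le> B" using assms(3) unfolding bounded_metric_def by blast
  define FF where "FF = {A. admissible M d A \<and> A \<noteq> {} \<and> T ` A \<subseteq> A}"
  have MFF: "M \<in> FF" unfolding FF_def admissible_iff using assms(2,6) B by blast
  have chainI: "\<Inter>D \<in> FF" if D: "D \<noteq> {}" "D \<subseteq> FF" "\<forall>A\<in>D. \<forall>B\<in>D. A \<subseteq> B \<or> B \<subseteq> A" for D
  proof -
    have "\<forall>A\<in>D. admissible M d A \<and> A \<noteq> {}" using D(2) unfolding FF_def by blast
    then have "\<Inter>D \<noteq> {}" using assms(4) D(1,3) unfolding adm_compact_def by blast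
    moreover have "admissible M d (\<Inter>D)" using admissible_Inter[OF assms(3)] D unfolding FF_def by blast
    moreover have "T ` \<Inter>D \<subseteq> \<Inter>D" using D unfolding FF_def by blast
    ultimately show ?thesis unfolding FF_def by blast
  qed
  define G where "G = (\<lambda>A. M - A) ` FF"
  have "\<forall>C\<in>chains G. \<exists>U\<in>G. \<forall>X\<in>C. X \<subseteq> U"
  proof
    fix C assume C: "C \<in> chains G"
    show "\<exists>U\<in>G. \<forall>X\<in>C. X \<subseteq> U"
    proof (cases "C = {}")
      case True then show ?thesis using MFF unfolding G_def by blast
    next
      case False
      define D where "D = {A \<in> FF. M - A \<in> C}"
      have CG: "C \<subseteq> G" using C chainsD2 by blast
      have sFF: "\<And>A. A \<in> FF \<Longrightarrow> A \<subseteq> M" unfolding FF_def admissible_iff by blast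
      have "D \<noteq> {}" using False CG unfolding D_def G_def by blast
      moreover have "D \<subseteq> FF" unfolding D_def by blast
      moreover have "\<forall>A\<in>D. \<forall>B\<in>D. A \<subseteq> B \<or> B \<subseteq> A"
      proof (intro ballI)
        fix A B' assume A: "A \<in> D" and B': "B' \<in> D"
        have "M - A \<in> C" "M - B' \<in> C" using A B' unfolding D_def by auto
        then have "M - A \<subseteq> M - B' \<or> M - B' \<subseteq> M - A" by (rule chainsD[OF C])
        moreover have "A \<subseteq> M" "B' \<subseteq> M" using A B' sFF unfolding D_def by auto
        ultimately show "A \<subseteq> B' \<or> B' \<subseteq> A" by blast
      qed
      ultimately have I: "\<Inter>D \<in> FF" by (rule chainI)
      have "\<forall>X\<in>C. X \<subseteq> M - \<Inter>D"
      proof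
        fix X assume "X \<in> C"
        then obtain A where "A \<in> FF" "X = M - A" using CG unfolding G_def by blast
        then have "A \<in> D" using \<open>X \<in> C\<close> unfolding D_def by simp
        then have "\<Inter>D \<subseteq> A" by blast
        then show "X \<subseteq> M - \<Inter>D" using \<open>X = M - A\<close> by blast
      qed
      then show ?thesis using I unfolding G_def by blast
    qed
  qed
  from Zorn_Lemma2[OF this] obtain M0 where M0: "M0 \<in> G" "\<forall>X\<in>G. M0 \<subseteq> X \<longrightarrow> X = M0" by blast
  then obtain K where K: "K \<in> FF" "M0 = M - K" unfolding G_def by blast
  have sFF: "\<And>A. A \<in> FF \<Longrightarrow> A \<subseteq> M" unfolding FF_def admissible_iff by blast
  have minK: "A = K" if "A \<in> FF" "A \<subseteq> K" for A
  proof -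
    have "M - A \<in> G" using that(1) unfolding G_def by blast
    moreover have "M0 \<subseteq> M - A" using K(2) that(2) by blast
    ultimately have "M - A = M0" using M0(2) by blast
    then have "M - A = M - K" using K(2) by simp
    then show ?thesis using sFF[OF that(1)] sFF[OF K(1)] by blast
  qed
  have Kadm: "admissible M d K" and Kne: "K \<noteq> {}" and KT: "T ` K \<subseteq> K" and KM: "K \<subseteq> M"
    using K(1) sFF unfolding FF_def by auto
  define K' where "K' = M \<inter> \<Inter>{C \<in> closed_balls M d. T ` K \<subseteq> C}"
  have K'adm: "admissible M d K'" unfolding K'_def using admissible_cov[OF assms(3)] KT KM by blast
  have K'K: "K' \<subseteq> K" unfolding K'_def using cov_least[OF Kadm KT] .
  have TKK': "T ` K \<subseteq> K'" unfolding K'_def using KT KM by blast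
  have "K' \<in> FF" unfolding FF_def using K'adm K'K TKK' Kne by blast
  then have K'eq: "K' = K" using minK K'K by blast
  have cov: "K \<subseteq> {y \<in> M. d z y \<le> s}" if "z \<in> M" "s \<ge> 0" "\<forall>y\<in>K. d z (T y) \<le> s" for z s
  proof -
    have "{y \<in> M. d z y \<le> s} \<in> closed_balls M d" using that unfolding closed_balls_def by blast
    moreover have "T ` K \<subseteq> {y \<in> M. d z y \<le> s}" using that KT KM by blast
    ultimately show ?thesis using K'eq unfolding K'_def by blast
  qed
  have bddK: "bdd_above {d x y | y. y \<in> K}" if "x \<in> M" for x
    by (rule bdd_aboveI[where M=B]) (use B that KM in auto)
  have rad_upper: "d x y \<le> rad_pt d x K" if "x \<in> M" "y \<in> K" for x y
    unfolding rad_pt_def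
  proof (rule cSup_upper)
    show "d x y \<in> {d x y |y. y \<in> K}" using that by blast
    show "bdd_above {d x y |y. y \<in> K}" by (rule bddK[OF that(1)])
  qed
  have rad_least: "rad_pt d x K \<le> s" if "\<forall>y\<in>K. d x y \<le> s" for x s
    unfolding rad_pt_def by (rule cSup_least) (use that Kne in blast)+
  define r where "r = cheb_rad d K"
  have radne: "{rad_pt d x K | x. x \<in> K} \<noteq> {}" using Kne by blast
  have radbdd: "bdd_below {rad_pt d x K | x. x \<in> K}"
  proof -
    have "0 \<le> rad_pt d x K" if "x \<in> K" for x
      using rad_upper[of x x] that KM by (meson nonneg order_trans subsetD)
    then show ?thesis unfolding bdd_below_def by blast
  qed
  have r0: "r \<ge> 0"
    unfolding r_def cheb_rad_def
  proof (rule cInf_greatest[OF radne])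
    fix v assume "v \<in> {rad_pt d x K | x. x \<in> K}"
    then obtain x where "x \<in> K" "v = rad_pt d x K" by blast
    then show "0 \<le> v" using rad_upper[of x x] KM by (meson nonneg order_trans subsetD)
  qed
  define S where "S = (\<lambda>e. {x \<in> K. \<forall>y\<in>K. d x y \<le> r + e})"
  have Sadm: "admissible M d (S e)" if "e \<ge> 0" for e
  proof -
    have "S e = \<Inter>({K} \<union> {{y' \<in> M. d y y' \<le> r + e} | y. y \<in> K})"
    proof (intro equalityI subsetI)
      fix x assume x: "x \<in> S e"
      show "x \<in> \<Inter>({K} \<union> {{y' \<in> M. d y y' \<le> r + e} | y. y \<in> K})"
      proof (rule InterI)
        fix X assume "X \<in> {K} \<union> {{y' \<in> M. d y y' \<le> r + e} | y. y \<in> K}"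
        then consider "X = K" | y where "y \<in> K" "X = {y' \<in> M. d y y' \<le> r + e}" by blast
        then show "x \<in> X"
        proof cases
          case 1 then show ?thesis using x unfolding S_def by blast
        next
          case (2 y)
          have "x \<in> K" "d x y \<le> r + e" using x 2(1) unfolding S_def by auto
          moreover have "d y x = d x y" by (rule commute)
          ultimately show ?thesis using 2(2) KM by auto
        qed
      qed
    next
      fix x assume x: "x \<in> \<Inter>({K} \<union> {{y' \<in> M. d y y' \<le> r + e} | y. y \<in> K})"
      have xK: "x \<in> K" using x by blast
      have "d x y \<le> r + e" if y: "y \<in> K" for y
      proof -
        have "{y' \<in> M. d y y' \<le> r + e} \<in> {K} \<union> {{y' \<in> M. d y y' \<le> r + e} | y. y \<in> K}"
          using y by blast
        then have "x \<in> {y' \<in> M. d y y' \<le> r + e}" using x by (rule InterD[rotated])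
        then have "d y x \<le> r + e" by simp
        then show ?thesis by (simp add: commute)
      qed
      then show "x \<in> S e" unfolding S_def using xK by blast
    qed
    moreover have "admissible M d (\<Inter>({K} \<union> {{y' \<in> M. d y y' \<le> r + e} | y. y \<in> K}))"
      by (rule admissible_Inter[OF assms(3)]) (use Kadm admissible_ball[OF assms(3)] r0 that KM in auto)
    ultimately show ?thesis by simp
  qed
  have Sne: "S e \<noteq> {}" if "e > 0" for e
  proof -
    have "r < r + e" using that by simp
    then obtain v where "v \<in> {rad_pt d x K | x. x \<in> K}" "v < r + e"
      unfolding r_def cheb_rad_def using cInf_lessD[OF radne] by blast
    then obtain x where "x \<in> K" "rad_pt d x K < r + e" by blast
    then have "x \<in> S e" unfolding S_def using rad_upper KM by fastforce
    then show ?thesis by blast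
  qed
  have "\<Inter>(S ` {0<..}) \<noteq> {}"
    using assms(4) unfolding adm_compact_def
  proof (elim allE impE)
    show "S ` {0<..} \<noteq> {} \<and> (\<forall>A\<in>S ` {0<..}. admissible M d A \<and> A \<noteq> {}) \<and>
      (\<forall>A\<in>S ` {0<..}. \<forall>B\<in>S ` {0<..}. A \<subseteq> B \<or> B \<subseteq> A)"
    proof (intro conjI)
      show "S ` {0<..} \<noteq> {}" by auto
      show "\<forall>A\<in>S ` {0<..}. admissible M d A \<and> A \<noteq> {}" using Sadm Sne by auto
      show "\<forall>A\<in>S ` {0<..}. \<forall>B\<in>S ` {0<..}. A \<subseteq> B \<or> B \<subseteq> A"
      proof (intro ballI)
        fix A B' assume "A \<in> S ` {0<..}" "B' \<in> S ` {0<..}"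
        then obtain e1 e2 where "A = S e1" "B' = S e2" by blast
        moreover have "S e1 \<subseteq> S e2" if "e1 \<le> e2" for e1 e2 :: real
          unfolding S_def using that by fastforce
        ultimately show "A \<subseteq> B' \<or> B' \<subseteq> A" by (meson linear)
      qed
    qed
  qed
  have S0eq: "\<Inter>(S ` {0<..}) = S 0"
  proof
    show "\<Inter>(S ` {0<..}) \<subseteq> S 0"
    proof
      fix x assume x: "x \<in> \<Inter>(S ` {0<..})"
      have "\<forall>y\<in>K. \<forall>e>0. d x y \<le> r + e" using x unfolding S_def by auto
      then have "\<forall>y\<in>K. d x y \<le> r + 0"
        by (metis add.right_neutral field_le_epsilon)
      moreover have "x \<in> S 1" using x by auto
      then have "x \<in> K" unfolding S_def by auto
      ultimately show "x \<in> S 0" unfolding S_def by blast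
    qed
    show "S 0 \<subseteq> \<Inter>(S ` {0<..})" unfolding S_def by fastforce
  qed
  have S0ne: "S 0 \<noteq> {}" using S0eq \<open>\<Inter>(S ` {0<..}) \<noteq> {}\<close> by simp
  have S0T: "T ` S 0 \<subseteq> S 0"
  proof
    fix tx assume "tx \<in> T ` S 0"
    then obtain x where x: "x \<in> S 0" "tx = T x" by blast
    have xK: "x \<in> K" using x unfolding S_def by blast
    have "d (T x) (T y) \<le> r" if y: "y \<in> K" for y
    proof -
      have orbK: "orbit T y \<subseteq> K"
      proof -
        have "(T ^^ n) y \<in> K" for n by (induction n) (use y KT in auto)
        then show ?thesis unfolding orbit_def by blast
      qed
      have "d (T x) (T y) \<le> rad_pt d x (orbit T y)"
        using assms(7) xK y KM unfolding orbitally_wrt_nonexpansive_def by blast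
      also have "\<dots> \<le> r" unfolding rad_pt_def
      proof (rule cSup_least)
        show "{d x ya |ya. ya \<in> orbit T y} \<noteq> {}" unfolding orbit_def by blast
        show "\<And>v. v \<in> {d x ya |ya. ya \<in> orbit T y} \<Longrightarrow> v \<le> r"
          using x orbK unfolding S_def by auto
      qed
      finally show ?thesis .
    qed
    then have "K \<subseteq> {y \<in> M. d (T x) y \<le> r}" using cov[of "T x" r] assms(6) xK KM r0 by blast
    then show "tx \<in> S 0" unfolding S_def using x xK KT by auto
  qed
  have "S 0 \<in> FF" unfolding FF_def using Sadm[of 0] S0ne S0T by simp
  moreover have "S 0 \<subseteq> K" unfolding S_def by blast
  ultimately have S0K: "S 0 = K" using minK by blast
  have allr: "\<forall>x\<in>K. \<forall>y\<in>K. d x y \<le> r" using S0K unfolding S_def by auto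
  have diamle: "diam d K \<le> r" unfolding diam_def
  proof (rule cSup_least)
    obtain k where "k \<in> K" using Kne by blast
    then show "{d x y |x y. x \<in> K \<and> y \<in> K} \<noteq> {}" by blast
    show "\<And>v. v \<in> {d x y |x y. x \<in> K \<and> y \<in> K} \<Longrightarrow> v \<le> r" using allr by blast
  qed
  have "\<not> diam d K > 0"
  proof
    assume "diam d K > 0"
    then have "cheb_rad d K < diam d K" using assms(5) Kadm unfolding adm_normal_def by blast
    then show False using diamle unfolding r_def by simp
  qed
  then have "\<forall>x\<in>K. \<forall>y\<in>K. d x y \<le> 0"
  proof -
    have "d x y \<le> diam d K" if "x \<in> K" "y \<in> K" for x y
      unfolding diam_def
    proof (rule cSup_upper)
      show "d x y \<in> {d x y |x y. x \<in> K \<and> y \<in> K}" using that by blast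
      show "bdd_above {d x y |x y. x \<in> K \<and> y \<in> K}"
        by (rule bdd_aboveI[where M=B]) (use B KM in auto)
    qed
    then show ?thesis using \<open>\<not> diam d K > 0\<close> by fastforce
  qed
  moreover obtain x where "x \<in> K" using Kne by blast
  ultimately have "d (T x) x \<le> 0" using KT by blast
  then have "T x = x" using \<open>x \<in> K\<close> KT KM nonneg[of "T x" x] zero by (meson antisym image_subset_iff subsetD)
  then show ?thesis using \<open>x \<in> K\<close> KM by blast
qed

end
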